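(* $URD(6;K_2,S(C_3))\supseteq J(6)=\{(1,2),(5,0)\}$; that is, for each $(r,s)\in\{(1,2),(5,0)\}$ there exists a partition of the edge set of $K_6$ into $r$ 1-factors and $s$ classes each consisting of a single 3-sun spanning all six vertices.
   Context: A 3-sun is the graph on $6$ distinct vertices $a_1,a_2,a_3,b_1,b_2,b_3$ consisting of the triangle $(a_1,a_2,a_3)$ together with the edges $\{a_i,b_i\}$, $i=1,2,3$. $URD(v;K_2,S(C_3))$ denotes the set of pairs $(r,s)$ such that the edge set of $K_v$ can be partitioned into $r$ 1-factors and $s$ classes each of which is a set of vertex-disjoint 3-suns covering every vertex exactly once. *)

theory Defs
  imports Main
begin

definition complete_edges :: "'a set \<Rightarrow> 'a set set" where
  "complete_edges V = {{x, y} | x y. x \<in> V \<and> y \<in> V \<and> x \<noteq> y}"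

definition one_factor :: "'a set \<Rightarrow> 'a set set \<Rightarrow> bool" where
  "one_factor V F \<longleftrightarrow> F \<subseteq> complete_edges V \<and> (\<forall>v\<in>V. \<exists>!e. e \<in> F \<and> v \<in> e)"

definition sun_edges :: "'a \<Rightarrow> 'a \<Rightarrow> 'a \<Rightarrow> 'a \<Rightarrow> 'a \<Rightarrow> 'a \<Rightarrow> 'a set set" where
  "sun_edges a1 a2 a3 b1 b2 b3 = {{a1, a2}, {a2, a3}, {a1, a3}, {a1, b1}, {a2, b2}, {a3, b3}}"

definition is_3sun :: "'a set set \<Rightarrow> 'a set \<Rightarrow> bool" where
  "is_3sun E W \<longleftrightarrow> (\<exists>a1 a2 a3 b1 b2 b3. distinct [a1, a2, a3, b1, b2, b3] \<and>
      W = {a1, a2, a3, b1, b2, b3} \<and> E = sun_edges a1 a2 a3 b1 b2 b3)"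

definition sun_factor :: "'a set \<Rightarrow> 'a set set \<Rightarrow> bool" where
  "sun_factor V S \<longleftrightarrow> (\<exists>\<S>. (\<forall>(E, W)\<in>\<S>. is_3sun E W) \<and>
      (\<forall>v\<in>V. \<exists>!p. p \<in> \<S> \<and> v \<in> snd p) \<and>
      (\<Union>p\<in>\<S>. snd p) = V \<and>
      S = (\<Union>p\<in>\<S>. fst p))"

definition URD :: "'a set \<Rightarrow> (nat \<times> nat) set" where
  "URD V = {(r, s). \<exists>C :: nat \<Rightarrow> 'a set set.
      (\<forall>i<r. one_factor V (C i)) \<and>
      (\<forall>i. r \<le> i \<and> i < r + s \<longrightarrow> sun_factor V (C i)) \<and>
      (\<forall>i<r + s. \<forall>j<r + s. i \<noteq> j \<longrightarrow> C i \<inter> C j = {}) \<and>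
      (\<Union>i<r + s. C i) = complete_edges V}"

end

theory Submission
  imports Defs
begin

lemma V6: "({0..<6} :: nat set) = {0,1,2,3,4,5}" by auto
lemma CE1: "x \<in> {0,1,2,3,4,5::nat} \<Longrightarrow> y \<in> {0,1,2,3,4,5} \<Longrightarrow> x \<noteq> y \<Longrightarrow> {x,y} \<in> 
  {{0,1},{0,2},{0,3},{0,4},{0,5},{1,2},{1,3},{1,4},{1,5},{2,3},{2,4},{2,5},{3,4},{3,5},{4,5}}"
  apply (simp only: insert_iff empty_iff)
  apply (elim disjE)
  apply (simp_all only: doubleton_eq_iff) 
  apply simp_all
  done
lemma CE2: "e \<in> {{0,1},{0,2},{0,3},{0,4},{0,5},{1,2},{1,3},{1,4},{1,5},{2,3},{2,4},{2,5},{3,4},{3,5},{4,5}}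
  \<Longrightarrow> \<exists>x y. e = {x,y} \<and> x \<in> {0,1,2,3,4,5::nat} \<and> y \<in> {0,1,2,3,4,5} \<and> x \<noteq> y"
  apply (simp only: insert_iff empty_iff)
  apply (elim disjE)
  apply (rule exI, rule exI, rule conjI, assumption, simp)+
  apply (erule FalseE)
  done
lemma CE: "complete_edges ({0..<6} :: nat set) =
  {{0,1},{0,2},{0,3},{0,4},{0,5},{1,2},{1,3},{1,4},{1,5},{2,3},{2,4},{2,5},{3,4},{3,5},{4,5}}"
  unfolding complete_edges_def V6 
  apply (rule set_eqI) apply (rule iffI)
   apply (elim CollectE exE conjE) apply hypsubst apply (rule CE1; assumption)
  apply (drule CE2) apply (simp only: mem_Collect_eq)
  done

lemma seteq: "A \<subseteq> B \<Longrightarrow> B \<subseteq> A \<Longrightarrow> A = B" by (rule equalityI)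

lemma pm: assumes "distinct [a,b,c,d,e,f]" "V = {a,b,c,d,e,f}" shows "one_factor V {{a,b},{c,d},{e,f}}"
proof -
  have sub: "{{a,b},{c,d},{e,f}} \<subseteq> complete_edges V"
    using assms unfolding complete_edges_def by auto
  have "\<forall>v\<in>V. \<exists>!x. x \<in> {{a,b},{c,d},{e,f}} \<and> v \<in> x"
  proof
    fix v assume "v \<in> V"
    then have "v = a \<or> v = b \<or> v = c \<or> v = d \<or> v = e \<or> v = f" using assms(2) by simp
    then show "\<exists>!x. x \<in> {{a,b},{c,d},{e,f}} \<and> v \<in> x"
      using assms(1) by (elim disjE) (simp_all, blast+)
  qed
  with sub show ?thesis unfolding one_factor_def by simp
qed

lemma sf: assumes "distinct [a1, a2, a3, b1, b2, b3]" "{a1, a2, a3, b1, b2, b3} = V"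
  shows "sun_factor V (sun_edges a1 a2 a3 b1 b2 b3)"
  unfolding sun_factor_def
proof (rule exI[of _ "{(sun_edges a1 a2 a3 b1 b2 b3, {a1, a2, a3, b1, b2, b3})}"], intro conjI)
  show "\<forall>(E, W)\<in>{(sun_edges a1 a2 a3 b1 b2 b3, {a1, a2, a3, b1, b2, b3})}. is_3sun E W"
    unfolding is_3sun_def using assms(1) by blast
  show "\<forall>v\<in>V. \<exists>!p. p \<in> {(sun_edges a1 a2 a3 b1 b2 b3, {a1, a2, a3, b1, b2, b3})} \<and> v \<in> snd p"
    using assms(2) by auto
  show "(\<Union>p\<in>{(sun_edges a1 a2 a3 b1 b2 b3, {a1, a2, a3, b1, b2, b3})}. snd p) = V"
    using assms(2) by simp
  show "sun_edges a1 a2 a3 b1 b2 b3 = (\<Union>p\<in>{(sun_edges a1 a2 a3 b1 b2 b3, {a1, a2, a3, b1, b2, b3})}. fst p)"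
    by simp
qed

lemma A: "(1::nat, 2::nat) \<in> URD ({0..<6} :: nat set)"
proof -
  define C :: "nat \<Rightarrow> nat set set" where "C i = (if i = 0 then {{0,4},{1,5},{2,3}}
     else if i = 1 then sun_edges 0 1 2 3 4 5 else sun_edges 3 4 5 1 2 0)" for i
  have c0: "C 0 = {{0,4},{1,5},{2,3}}" "C 1 = sun_edges 0 1 2 3 4 5" "C 2 = sun_edges 3 4 5 1 2 0"
    by (simp_all add: C_def)
  have "one_factor {0..<6} (C 0)" unfolding c0 by (rule pm) (auto simp: V6)
  moreover have "sun_factor {0..<6} (C 1)" unfolding c0 V6 by (rule sf) auto
  moreover have "sun_factor {0..<6} (C 2)" unfolding c0 V6 by (rule sf) auto
  moreover have "C 0 \<inter> C 1 = {}" "C 0 \<inter> C 2 = {}" "C 1 \<inter> C 2 = {}"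
    unfolding c0 sun_edges_def by (simp_all add: doubleton_eq_iff)
  moreover have "(\<Union>i<3. C i) = complete_edges {0..<6}"
  proof -
    have "{..<3::nat} = {0,1,2}" by auto
    then have "(\<Union>i<3. C i) = C 0 \<union> C 1 \<union> C 2" by auto
    note U = this
    show ?thesis unfolding U CE c0 sun_edges_def
      by (simp only: Un_insert_left Un_empty_left, rule seteq; simp only: insert_subset empty_subsetI doubleton_eq_iff insert_iff; simp)
  qed
  ultimately show ?thesis unfolding URD_def
    apply simp apply (rule exI[of _ C])
    by (auto simp: less_Suc_eq numeral_eq_Suc Int_commute)
qed


lemma B: "(5::nat, 0::nat) \<in> URD ({0..<6} :: nat set)"
proof -
  define L :: "nat set set list" where "L = [{{5,0},{1,4},{2,3}}, {{5,1},{2,0},{3,4}},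
     {{5,2},{3,1},{4,0}}, {{5,3},{4,2},{0,1}}, {{5,4},{0,3},{1,2}}]"
  define C :: "nat \<Rightarrow> nat set set" where "C i = L ! i" for i
  have c: "C 0 = {{5,0},{1,4},{2,3}}" "C 1 = {{5,1},{2,0},{3,4}}" "C 2 = {{5,2},{3,1},{4,0}}"
    "C 3 = {{5,3},{4,2},{0,1}}" "C 4 = {{5,4},{0,3},{1,2}}"
    by (simp_all add: C_def L_def numeral_eq_Suc)
  have f: "\<forall>i<5. one_factor {0..<6} (C i)"
  proof (intro allI impI)
    fix i :: nat assume "i < 5"
    then have "i = 0 \<or> i = 1 \<or> i = 2 \<or> i = 3 \<or> i = 4" by auto
    then show "one_factor {0..<6} (C i)"
      by (elim disjE) (simp only: c; rule pm; auto simp: V6)+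
  qed
  have d: "\<forall>i<5. \<forall>j<5. i \<noteq> j \<longrightarrow> C i \<inter> C j = {}"
  proof (intro allI impI)
    fix i j :: nat assume "i < 5" "j < 5" "i \<noteq> j"
    then have "i = 0 \<or> i = 1 \<or> i = 2 \<or> i = 3 \<or> i = 4" "j = 0 \<or> j = 1 \<or> j = 2 \<or> j = 3 \<or> j = 4" by auto
    with \<open>i \<noteq> j\<close> show "C i \<inter> C j = {}"
      by (elim disjE) (simp_all only: c; simp add: doubleton_eq_iff)+
  qed
  have u: "(\<Union>i<5. C i) = complete_edges {0..<6}"
  proof -
    have "{..<5::nat} = {0,1,2,3,4}" by auto
    then have "(\<Union>i<5. C i) = C 0 \<union> C 1 \<union> C 2 \<union> C 3 \<union> C 4" by auto
    note U = this
    show ?thesis unfolding U CE c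
      by (simp only: Un_insert_left Un_empty_left, rule seteq; simp only: insert_subset empty_subsetI doubleton_eq_iff insert_iff; simp)
  qed
  show ?thesis unfolding URD_def
    apply simp apply (rule exI[of _ C]) using f d u by auto
qed

theorem lemma3p1:
  shows "{(1, 2), (5, 0)} \<subseteq> URD ({0..<6} :: nat set)"
  using A B by simp

end
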